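(* Let $q$ be a prime dividing $|L/N|$, let $L_q\le L$ be such that $L_q/N$ is a Sylow $q$-subgroup of $L/N$, and let $\mu\in Z^1(L_q/N,F_K)$. Suppose there exists a function $\omega_q:K/N\to W_{(q)}$ such that for every $g\in L_q$ we have $\mu(gN)_{(q)}={}^g\omega_q\,\omega_q^{-1}\,\nu_g$ for some $\nu_g\in\Gamma$. Then $\bar\mu:L_q/N\to F_K/\Gamma$, $gN\mapsto\mu(gN)\Gamma$, is a 1-coboundary, i.e. there exists $\omega\in F_K$ with $\mu(gN)\Gamma={}^g\omega\,\omega^{-1}\Gamma$ for all $g\in L_q$.
   Context: $G$ is a profinite group, $N$ a finite index normal pro-$p$ subgroup of $G$, and $N\le K\trianglelefteq L\le G$; $\Gamma$ is a subgroup of $\mathrm{Lin}(K/N)$, the group of continuous homomorphisms $K\to\mathbb{C}^\times$ trivial on $N$. $F_K$ is the group (pointwise multiplication) of functions $K/N\to\mathbb{C}^\times$, with $L/N$ acting by ${}^gf(xN)=f(g^{-1}xgN)$. $W\le\mathbb{C}^\times$ is the group of roots of unity and $W_{(\ell)}$ its $\ell$-primary component. For each prime $\ell$ a homomorphism $\pi_\ell:\mathbb{C}^\times\to W_{(\ell)}$ restricting to the identity on $W_{(\ell)}$ is fixed, and for a function $f$ with values in $\mathbb{C}^\times$, $f_{(\ell)}:=\pi_\ell\circ f$; thus ${}^g(f_{(\ell)})=({}^gf)_{(\ell)}$. *)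

theory Defs
  imports Complex_Main "HOL-Algebra.Coset" "HOL-Computational_Algebra.Primes"
begin

definition quot :: "('a, 'b) monoid_scheme \<Rightarrow> 'a set \<Rightarrow> 'a set \<Rightarrow> 'a set set" where
  "quot G H N = {N #>\<^bsub>G\<^esub> x | x. x \<in> H}"

definition Wpart :: "nat \<Rightarrow> complex set" where
  "Wpart l = {z. \<exists>k. z ^ (l ^ k) = 1}"

definition Lin :: "('a, 'b) monoid_scheme \<Rightarrow> 'a set \<Rightarrow> 'a set \<Rightarrow> ('a set \<Rightarrow> complex) set" where
  "Lin G K N = {\<gamma> \<in> extensional (quot G K N).
      (\<forall>X\<in>quot G K N. \<gamma> X \<noteq> 0) \<and>
      (\<forall>x\<in>K. \<forall>y\<in>K. \<gamma> (N #>\<^bsub>G\<^esub> (x \<otimes>\<^bsub>G\<^esub> y)) = \<gamma> (N #>\<^bsub>G\<^esub> x) * \<gamma> (N #>\<^bsub>G\<^esub> y))}"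

definition subgroup_Lin :: "('a, 'b) monoid_scheme \<Rightarrow> 'a set \<Rightarrow> 'a set \<Rightarrow> ('a set \<Rightarrow> complex) set \<Rightarrow> bool" where
  "subgroup_Lin G K N \<Gamma> \<longleftrightarrow> \<Gamma> \<subseteq> Lin G K N \<and>
     (\<lambda>X\<in>quot G K N. 1) \<in> \<Gamma> \<and>
     (\<forall>\<gamma>\<in>\<Gamma>. \<forall>\<delta>\<in>\<Gamma>. (\<lambda>X\<in>quot G K N. \<gamma> X * \<delta> X) \<in> \<Gamma>) \<and>
     (\<forall>\<gamma>\<in>\<Gamma>. (\<lambda>X\<in>quot G K N. inverse (\<gamma> X)) \<in> \<Gamma>)"

(* the action of L/N on F_K: (^g f)(xN) = f(g^{-1} x g N) *)
definition act :: "('a, 'b) monoid_scheme \<Rightarrow> 'a set \<Rightarrow> 'a \<Rightarrow> ('a set \<Rightarrow> complex) \<Rightarrow> 'a \<Rightarrow> complex" where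
  "act G N g f x = f (N #>\<^bsub>G\<^esub> (inv\<^bsub>G\<^esub> g \<otimes>\<^bsub>G\<^esub> x \<otimes>\<^bsub>G\<^esub> g))"

end

theory Submission
  imports Defs "HOL-Analysis.Complex_Transcendental"
begin


lemma Wpart_nz:
  assumes q: "q > 0" and u: "u \<in> Wpart q"
  shows "u \<noteq> (0::complex)"
proof
  assume u0: "u = 0"
  obtain k where k: "u ^ (q ^ k) = 1" using u unfolding Wpart_def by blast
  have "q ^ k > 0" using q by simp
  then have "(0::complex) ^ (q ^ k) = 0" by (simp add: zero_power)
  then show False using k u0 by (metis zero_neq_one)
qed

lemma pi_lemmas:
  fixes \<pi> :: "complex \<Rightarrow> complex"
  assumes pi_hom: "\<And>a b. a \<noteq> 0 \<Longrightarrow> b \<noteq> 0 \<Longrightarrow> \<pi> (a * b) = \<pi> a * \<pi> b"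
    and pi_range: "\<And>a. a \<noteq> 0 \<Longrightarrow> \<pi> a \<in> Wpart q"
    and pi_id: "\<And>w. w \<in> Wpart q \<Longrightarrow> \<pi> w = w"
    and q0: "q > 0"
  shows pi_one: "\<pi> 1 = 1"
    and pi_nz: "\<And>a. a \<noteq> 0 \<Longrightarrow> \<pi> a \<noteq> 0"
    and pi_inv: "\<And>a. a \<noteq> 0 \<Longrightarrow> \<pi> (inverse a) = inverse (\<pi> a)"
    and pi_pow: "\<And>a k. a \<noteq> 0 \<Longrightarrow> \<pi> (a ^ k) = \<pi> a ^ k"
proof -
  show one: "\<pi> 1 = 1" by (rule pi_id) (auto simp: Wpart_def intro: exI[of _ 0])
  show nz: "\<And>a. a \<noteq> 0 \<Longrightarrow> \<pi> a \<noteq> 0" using pi_range Wpart_nz[OF q0] by blast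
  show "\<pi> (inverse a) = inverse (\<pi> a)" if "a \<noteq> 0" for a
  proof -
    have "\<pi> a * \<pi> (inverse a) = 1" using pi_hom[of a "inverse a"] that one by simp
    then show ?thesis by (rule inverse_unique[symmetric])
  qed
  show "\<pi> (a ^ k) = \<pi> a ^ k" if "a \<noteq> 0" for a k
  proof (induction k)
    case 0 then show ?case using one by simp
  next
    case (Suc k)
    have "\<pi> (a ^ Suc k) = \<pi> (a * a ^ k)" by simp
    also have "\<dots> = \<pi> a * \<pi> (a ^ k)" by (rule pi_hom) (use that in simp_all)
    also have "\<dots> = \<pi> a ^ Suc k" using Suc by simp
    finally show ?case .
  qed
qed

lemma kernel_root:
  fixes \<pi> :: "complex \<Rightarrow> complex"
  assumes pi_hom: "\<And>a b. a \<noteq> 0 \<Longrightarrow> b \<noteq> 0 \<Longrightarrow> \<pi> (a * b) = \<pi> a * \<pi> b"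
    and pi_range: "\<And>a. a \<noteq> 0 \<Longrightarrow> \<pi> a \<in> Wpart q"
    and pi_id: "\<And>w. w \<in> Wpart q \<Longrightarrow> \<pi> w = w"
    and q: "q > 0"
    and z: "z \<noteq> 0" "\<pi> z = 1"
  shows "\<exists>!w. w \<noteq> 0 \<and> \<pi> w = 1 \<and> w ^ (q ^ m) = z"
proof -
  have P2: "\<And>a. a \<noteq> 0 \<Longrightarrow> \<pi> a \<noteq> 0" using pi_hom pi_range pi_id q by (rule pi_lemmas(2))
  have P3: "\<And>a. a \<noteq> 0 \<Longrightarrow> \<pi> (inverse a) = inverse (\<pi> a)" using pi_hom pi_range pi_id q by (rule pi_lemmas(3))
  have P4: "\<And>a k. a \<noteq> 0 \<Longrightarrow> \<pi> (a ^ k) = \<pi> a ^ k" using pi_hom pi_range pi_id q by (rule pi_lemmas(4))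
  have n0: "q ^ m \<noteq> 0" using q by simp
  obtain w0 where w0: "w0 \<noteq> 0" "z = w0 ^ (q ^ m)"
    using exists_complex_root_nonzero[OF z(1) n0] by blast
  have "\<pi> w0 ^ (q ^ m) = 1" using P4[OF w0(1)] w0 z by simp
  hence u: "inverse (\<pi> w0) \<in> Wpart q" unfolding Wpart_def by (auto simp: power_inverse)
  define w where "w = w0 * inverse (\<pi> w0)"
  have pw0: "\<pi> w0 \<noteq> 0" using P2 w0 by blast
  have wnz: "w \<noteq> 0" using w0 pw0 by (simp add: w_def)
  have "\<pi> w = 1" unfolding w_def using pi_hom[of w0 "inverse (\<pi> w0)"] pi_id[OF u] w0 pw0 by simp
  moreover have "w ^ (q ^ m) = z"
    unfolding w_def using w0 \<open>\<pi> w0 ^ (q ^ m) = 1\<close> by (simp add: power_mult_distrib power_inverse)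
  ultimately have ex: "w \<noteq> 0 \<and> \<pi> w = 1 \<and> w ^ (q ^ m) = z" using wnz by blast
  have uniq: "a = b" if a: "a \<noteq> 0" "\<pi> a = 1" and b: "b \<noteq> 0" "\<pi> b = 1" and e: "a ^ (q ^ m) = b ^ (q ^ m)" for a b
  proof -
    define u where "u = a * inverse b"
    have "u ^ (q ^ m) = 1" unfolding u_def using e b by (simp add: power_mult_distrib power_inverse)
    hence "u \<in> Wpart q" unfolding Wpart_def by blast
    hence "\<pi> u = u" by (rule pi_id)
    moreover have "\<pi> u = 1" unfolding u_def using pi_hom[of a "inverse b"] a b P3[of b] by simp
    ultimately have "u = 1" by simp
    thus ?thesis unfolding u_def using b by (simp add: field_simps)
  qed
  show ?thesis
  proof (rule ex1I[of _ w])
    show "w \<noteq> 0 \<and> \<pi> w = 1 \<and> w ^ (q ^ m) = z" by (rule ex)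
  next
    fix y assume y: "y \<noteq> 0 \<and> \<pi> y = 1 \<and> y ^ (q ^ m) = z"
    show "y = w" by (rule uniq) (use y ex in simp_all)
  qed
qed

lemma prod_kernel:
  fixes \<pi> :: "complex \<Rightarrow> complex"
  assumes pi_hom: "\<And>a b. a \<noteq> 0 \<Longrightarrow> b \<noteq> 0 \<Longrightarrow> \<pi> (a * b) = \<pi> a * \<pi> b"
    and pi_one: "\<pi> 1 = 1"
    and "finite A" and "\<And>a. a \<in> A \<Longrightarrow> c a \<noteq> 0 \<and> \<pi> (c a) = 1"
  shows "prod c A \<noteq> 0 \<and> \<pi> (prod c A) = 1"
  using assms(3,4)
proof (induction A rule: finite_induct)
  case empty then show ?case using pi_one by simp
next
  case (insert a A)
  then show ?case using pi_hom[of "c a" "prod c A"] by simp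
qed

theorem lemma3p2:
  fixes G :: "('a, 'b) monoid_scheme"
    and N K L Lq :: "'a set"
    and \<Gamma> :: "('a set \<Rightarrow> complex) set"
    and \<pi> :: "complex \<Rightarrow> complex"
    and q :: nat
    and \<mu> :: "'a set \<Rightarrow> 'a set \<Rightarrow> complex"
    and \<omega>q :: "'a set \<Rightarrow> complex"
  assumes grp: "group G"
    and N_normal: "N \<lhd> G"
    and N_fin_index: "finite (rcosets\<^bsub>G\<^esub> N)"
    and L_sub: "subgroup L G"
    and K_sub: "subgroup K G"
    and NK: "N \<subseteq> K"
    and K_normal_L: "K \<lhd> (G\<lparr>carrier := L\<rparr>)"
    and Gamma: "subgroup_Lin G K N \<Gamma>"
    and pi_hom: "\<And>a b. a \<noteq> 0 \<Longrightarrow> b \<noteq> 0 \<Longrightarrow> \<pi> (a * b) = \<pi> a * \<pi> b"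
    and pi_range: "\<And>a. a \<noteq> 0 \<Longrightarrow> \<pi> a \<in> Wpart q"
    and pi_id: "\<And>w. w \<in> Wpart q \<Longrightarrow> \<pi> w = w"
    and q_prime: "prime q"
    and q_dvd: "q dvd card (quot G L N)"
    and Lq_sub: "subgroup Lq G"
    and NLq: "N \<subseteq> Lq"
    and LqL: "Lq \<subseteq> L"
    and Lq_sylow: "card (quot G Lq N) = q ^ multiplicity q (card (quot G L N))"
    and mu_val: "\<And>A X. A \<in> quot G Lq N \<Longrightarrow> X \<in> quot G K N \<Longrightarrow> \<mu> A X \<noteq> 0"
    and mu_cocycle: "\<And>g h x. g \<in> Lq \<Longrightarrow> h \<in> Lq \<Longrightarrow> x \<in> K \<Longrightarrow>
        \<mu> (N #>\<^bsub>G\<^esub> (g \<otimes>\<^bsub>G\<^esub> h)) (N #>\<^bsub>G\<^esub> x)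
          = \<mu> (N #>\<^bsub>G\<^esub> g) (N #>\<^bsub>G\<^esub> x) * act G N g (\<mu> (N #>\<^bsub>G\<^esub> h)) x"
    and omq_val: "\<And>X. X \<in> quot G K N \<Longrightarrow> \<omega>q X \<in> Wpart q"
    and omq: "\<And>g. g \<in> Lq \<Longrightarrow> \<exists>\<nu>\<in>\<Gamma>. \<forall>x\<in>K.
        \<pi> (\<mu> (N #>\<^bsub>G\<^esub> g) (N #>\<^bsub>G\<^esub> x))
          = act G N g \<omega>q x * inverse (\<omega>q (N #>\<^bsub>G\<^esub> x)) * \<nu> (N #>\<^bsub>G\<^esub> x)"
  shows "\<exists>\<omega>. (\<forall>X\<in>quot G K N. \<omega> X \<noteq> 0) \<and>
     (\<forall>g\<in>Lq. \<exists>\<gamma>\<in>\<Gamma>. \<forall>x\<in>K.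
        \<mu> (N #>\<^bsub>G\<^esub> g) (N #>\<^bsub>G\<^esub> x)
          = act G N g \<omega> x * inverse (\<omega> (N #>\<^bsub>G\<^esub> x)) * \<gamma> (N #>\<^bsub>G\<^esub> x))"
proof -
  interpret G: group G by (rule grp)
  interpret Nn: normal N G by (rule N_normal)
  have q0: "q > 0" using q_prime prime_gt_0_nat by blast
  have P1: "\<pi> 1 = 1" using pi_hom pi_range pi_id q0 by (rule pi_lemmas(1))
  have P2: "\<And>a. a \<noteq> 0 \<Longrightarrow> \<pi> a \<noteq> 0" using pi_hom pi_range pi_id q0 by (rule pi_lemmas(2))
  have P3: "\<And>a. a \<noteq> 0 \<Longrightarrow> \<pi> (inverse a) = inverse (\<pi> a)" using pi_hom pi_range pi_id q0 by (rule pi_lemmas(3))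
  have P4: "\<And>a k. a \<noteq> 0 \<Longrightarrow> \<pi> (a ^ k) = \<pi> a ^ k" using pi_hom pi_range pi_id q0 by (rule pi_lemmas(4))
  define P where "P = quot G Lq N"
  define m where "m = multiplicity q (card (quot G L N))"
  have nP: "card P = q ^ m" using Lq_sylow by (simp add: P_def m_def)
  have LqG: "Lq \<subseteq> carrier G" using Lq_sub subgroup.subset by blast
  have KG: "K \<subseteq> carrier G" using K_sub subgroup.subset by blast
  have NG: "N \<subseteq> carrier G" using Nn.subset by blast
  have finP: "finite P"
  proof (rule finite_subset[OF _ N_fin_index])
    show "P \<subseteq> rcosets\<^bsub>G\<^esub> N" using LqG unfolding P_def quot_def RCOSETS_def by blast
  qed
  have inP: "\<And>g. g \<in> Lq \<Longrightarrow> N #>\<^bsub>G\<^esub> g \<in> P" unfolding P_def quot_def by blast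
  have inQK: "\<And>x. x \<in> K \<Longrightarrow> N #>\<^bsub>G\<^esub> x \<in> quot G K N" unfolding quot_def by blast
  have conj: "inv\<^bsub>G\<^esub> g \<otimes>\<^bsub>G\<^esub> x \<otimes>\<^bsub>G\<^esub> g \<in> K" if g: "g \<in> Lq" and x: "x \<in> K" for g x
  proof -
    have gL: "g \<in> L" using g LqL by blast
    have "inv\<^bsub>G\<lparr>carrier := L\<rparr>\<^esub> g \<otimes>\<^bsub>G\<lparr>carrier := L\<rparr>\<^esub> x \<otimes>\<^bsub>G\<lparr>carrier := L\<rparr>\<^esub> g \<in> K"
      using normal.inv_op_closed1[OF K_normal_L, of g x] gL x by simp
    then show ?thesis using G.m_inv_consistent[OF L_sub gL] by simp
  qed
  define mu' where "mu' A X = \<mu> A X * inverse (\<pi> (\<mu> A X))" for A X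
  have mu'K: "mu' A X \<noteq> 0 \<and> \<pi> (mu' A X) = 1" if A: "A \<in> P" and X: "X \<in> quot G K N" for A X
  proof -
    have a: "\<mu> A X \<noteq> 0" using mu_val A X unfolding P_def by blast
    have pa: "\<pi> (\<mu> A X) \<noteq> 0" using P2 a by blast
    have pp: "\<pi> (\<pi> (\<mu> A X)) = \<pi> (\<mu> A X)" using pi_id pi_range a by blast
    show ?thesis unfolding mu'_def using a pa pi_hom[of "\<mu> A X" "inverse (\<pi> (\<mu> A X))"] P3[OF pa] pp by simp
  qed
  have mu'_cocycle: "mu' (N #>\<^bsub>G\<^esub> (g \<otimes>\<^bsub>G\<^esub> h)) (N #>\<^bsub>G\<^esub> x)
      = mu' (N #>\<^bsub>G\<^esub> g) (N #>\<^bsub>G\<^esub> x) * mu' (N #>\<^bsub>G\<^esub> h) (N #>\<^bsub>G\<^esub> (inv\<^bsub>G\<^esub> g \<otimes>\<^bsub>G\<^esub> x \<otimes>\<^bsub>G\<^esub> g))"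
    if g: "g \<in> Lq" and h: "h \<in> Lq" and x: "x \<in> K" for g h x
  proof -
    define a where "a = \<mu> (N #>\<^bsub>G\<^esub> g) (N #>\<^bsub>G\<^esub> x)"
    define b where "b = \<mu> (N #>\<^bsub>G\<^esub> h) (N #>\<^bsub>G\<^esub> (inv\<^bsub>G\<^esub> g \<otimes>\<^bsub>G\<^esub> x \<otimes>\<^bsub>G\<^esub> g))"
    have a0: "a \<noteq> 0" unfolding a_def using mu_val inP[OF g] inQK[OF x] unfolding P_def by blast
    have b0: "b \<noteq> 0" unfolding b_def using mu_val inP[OF h] inQK[OF conj[OF g x]] unfolding P_def by blast
    have e: "\<mu> (N #>\<^bsub>G\<^esub> (g \<otimes>\<^bsub>G\<^esub> h)) (N #>\<^bsub>G\<^esub> x) = a * b"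
      using mu_cocycle[OF g h x] unfolding a_def b_def act_def by simp
    show ?thesis unfolding mu'_def e using pi_hom[OF a0 b0]
      by (simp add: a_def[symmetric] b_def[symmetric] mult_ac)
  qed
  define r where "r H = (SOME h. h \<in> Lq \<and> H = N #>\<^bsub>G\<^esub> h)" for H
  have r: "r H \<in> Lq \<and> H = N #>\<^bsub>G\<^esub> r H" if "H \<in> P" for H
  proof -
    have "\<exists>h. h \<in> Lq \<and> H = N #>\<^bsub>G\<^esub> h" using that unfolding P_def quot_def by blast
    then show ?thesis unfolding r_def by (rule someI_ex)
  qed
  have rcos_cancel: "N #>\<^bsub>G\<^esub> a = N #>\<^bsub>G\<^esub> b"
    if g: "g \<in> carrier G" and a: "a \<in> carrier G" and b: "b \<in> carrier G"
      and e: "N #>\<^bsub>G\<^esub> (g \<otimes>\<^bsub>G\<^esub> a) = N #>\<^bsub>G\<^esub> (g \<otimes>\<^bsub>G\<^esub> b)" for g a b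
  proof -
    have "N #>\<^bsub>G\<^esub> a = N #>\<^bsub>G\<^esub> (inv\<^bsub>G\<^esub> g \<otimes>\<^bsub>G\<^esub> (g \<otimes>\<^bsub>G\<^esub> a))"
      using g a by (simp add: G.m_assoc[symmetric])
    also have "\<dots> = (N #>\<^bsub>G\<^esub> inv\<^bsub>G\<^esub> g) <#>\<^bsub>G\<^esub> (N #>\<^bsub>G\<^esub> (g \<otimes>\<^bsub>G\<^esub> a))"
      using g a by (simp add: Nn.rcos_sum)
    also have "\<dots> = (N #>\<^bsub>G\<^esub> inv\<^bsub>G\<^esub> g) <#>\<^bsub>G\<^esub> (N #>\<^bsub>G\<^esub> (g \<otimes>\<^bsub>G\<^esub> b))" using e by simp
    also have "\<dots> = N #>\<^bsub>G\<^esub> (inv\<^bsub>G\<^esub> g \<otimes>\<^bsub>G\<^esub> (g \<otimes>\<^bsub>G\<^esub> b))"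
      using g b by (simp add: Nn.rcos_sum)
    also have "\<dots> = N #>\<^bsub>G\<^esub> b" using g b by (simp add: G.m_assoc[symmetric])
    finally show ?thesis .
  qed
  define f where "f X = (\<Prod>H\<in>P. mu' H X)" for X
  have f_rel: "f (N #>\<^bsub>G\<^esub> x) = mu' (N #>\<^bsub>G\<^esub> g) (N #>\<^bsub>G\<^esub> x) ^ (q ^ m) * f (N #>\<^bsub>G\<^esub> (inv\<^bsub>G\<^esub> g \<otimes>\<^bsub>G\<^esub> x \<otimes>\<^bsub>G\<^esub> g))"
    if g: "g \<in> Lq" and x: "x \<in> K" for g x
  proof -
    define \<phi> where "\<phi> H = N #>\<^bsub>G\<^esub> (g \<otimes>\<^bsub>G\<^esub> r H)" for H
    have sub: "\<phi> ` P \<subseteq> P"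
    proof
      fix Z assume "Z \<in> \<phi> ` P"
      then obtain H where H: "H \<in> P" and Z: "Z = \<phi> H" by blast
      have "g \<otimes>\<^bsub>G\<^esub> r H \<in> Lq" by (rule subgroup.m_closed[OF Lq_sub g]) (use r[OF H] in blast)
      then show "Z \<in> P" unfolding Z \<phi>_def by (rule inP)
    qed
    have inj: "inj_on \<phi> P"
    proof (rule inj_onI)
      fix H H' assume H: "H \<in> P" and H': "H' \<in> P" and e: "\<phi> H = \<phi> H'"
      have "N #>\<^bsub>G\<^esub> r H = N #>\<^bsub>G\<^esub> r H'"
      proof (rule rcos_cancel[of g])
        show "g \<in> carrier G" using g LqG by blast
        show "r H \<in> carrier G" using r[OF H] LqG by blast
        show "r H' \<in> carrier G" using r[OF H'] LqG by blast
        show "N #>\<^bsub>G\<^esub> (g \<otimes>\<^bsub>G\<^esub> r H) = N #>\<^bsub>G\<^esub> (g \<otimes>\<^bsub>G\<^esub> r H')" using e by (simp add: \<phi>_def)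
      qed
      then show "H = H'" using r[OF H] r[OF H'] by simp
    qed
    have img: "\<phi> ` P = P" using endo_inj_surj[OF finP sub inj] .
    have "f (N #>\<^bsub>G\<^esub> x) = (\<Prod>H\<in>\<phi> ` P. mu' H (N #>\<^bsub>G\<^esub> x))" unfolding f_def img ..
    also have "\<dots> = (\<Prod>H\<in>P. mu' (\<phi> H) (N #>\<^bsub>G\<^esub> x))" using prod.reindex[OF inj] by simp
    also have "\<dots> = (\<Prod>H\<in>P. mu' (N #>\<^bsub>G\<^esub> g) (N #>\<^bsub>G\<^esub> x) * mu' H (N #>\<^bsub>G\<^esub> (inv\<^bsub>G\<^esub> g \<otimes>\<^bsub>G\<^esub> x \<otimes>\<^bsub>G\<^esub> g)))"
    proof (rule prod.cong[OF refl])
      fix H assume H: "H \<in> P"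
      show "mu' (\<phi> H) (N #>\<^bsub>G\<^esub> x) = mu' (N #>\<^bsub>G\<^esub> g) (N #>\<^bsub>G\<^esub> x) * mu' H (N #>\<^bsub>G\<^esub> (inv\<^bsub>G\<^esub> g \<otimes>\<^bsub>G\<^esub> x \<otimes>\<^bsub>G\<^esub> g))"
        unfolding \<phi>_def using mu'_cocycle[OF g _ x, of "r H"] r[OF H] by simp
    qed
    also have "\<dots> = mu' (N #>\<^bsub>G\<^esub> g) (N #>\<^bsub>G\<^esub> x) ^ (q ^ m) * f (N #>\<^bsub>G\<^esub> (inv\<^bsub>G\<^esub> g \<otimes>\<^bsub>G\<^esub> x \<otimes>\<^bsub>G\<^esub> g))"
      unfolding f_def prod.distrib using nP by simp
    finally show ?thesis .
  qed
  have fK: "f X \<noteq> 0 \<and> \<pi> (f X) = 1" if X: "X \<in> quot G K N" for X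
    unfolding f_def by (rule prod_kernel[OF pi_hom P1 finP]) (use mu'K X in auto)
  define root where "root z = (THE w. w \<noteq> 0 \<and> \<pi> w = 1 \<and> w ^ (q ^ m) = z)" for z
  define \<omega>' where "\<omega>' X = root (f X)" for X
  have \<omega>'K: "\<omega>' X \<noteq> 0 \<and> \<pi> (\<omega>' X) = 1 \<and> \<omega>' X ^ (q ^ m) = f X" if X: "X \<in> quot G K N" for X
  proof -
    have "\<exists>!w. w \<noteq> 0 \<and> \<pi> w = 1 \<and> w ^ (q ^ m) = f X"
      using pi_hom pi_range pi_id q0 conjunct1[OF fK[OF X]] conjunct2[OF fK[OF X]] by (rule kernel_root)
    then show ?thesis unfolding \<omega>'_def root_def by (rule theI')
  qed
  have mu'_cob: "mu' (N #>\<^bsub>G\<^esub> g) (N #>\<^bsub>G\<^esub> x) = \<omega>' (N #>\<^bsub>G\<^esub> x) * inverse (\<omega>' (N #>\<^bsub>G\<^esub> (inv\<^bsub>G\<^esub> g \<otimes>\<^bsub>G\<^esub> x \<otimes>\<^bsub>G\<^esub> g)))"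
    if g: "g \<in> Lq" and x: "x \<in> K" for g x
  proof -
    define X where "X = N #>\<^bsub>G\<^esub> x"
    define Y where "Y = N #>\<^bsub>G\<^esub> (inv\<^bsub>G\<^esub> g \<otimes>\<^bsub>G\<^esub> x \<otimes>\<^bsub>G\<^esub> g)"
    define u where "u = mu' (N #>\<^bsub>G\<^esub> g) X"
    have X: "X \<in> quot G K N" unfolding X_def using inQK x by blast
    have Y: "Y \<in> quot G K N" unfolding Y_def using inQK conj g x by blast
    have u: "u \<noteq> 0 \<and> \<pi> u = 1" unfolding u_def using mu'K inP[OF g] X by blast
    have wX: "\<omega>' X \<noteq> 0 \<and> \<pi> (\<omega>' X) = 1 \<and> \<omega>' X ^ (q ^ m) = f X" using \<omega>'K X by blast
    have wY: "\<omega>' Y \<noteq> 0 \<and> \<pi> (\<omega>' Y) = 1 \<and> \<omega>' Y ^ (q ^ m) = f Y" using \<omega>'K Y by blast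
    have fY: "f Y \<noteq> 0" using fK Y by blast
    have fr: "f X = u ^ (q ^ m) * f Y" unfolding X_def Y_def u_def by (rule f_rel[OF g x])
    define v where "v = \<omega>' X * inverse (\<omega>' Y)"
    have v0: "v \<noteq> 0" using wX wY unfolding v_def by simp
    have pv: "\<pi> v = 1" unfolding v_def using pi_hom[of "\<omega>' X" "inverse (\<omega>' Y)"] wX wY P3[of "\<omega>' Y"] by simp
    have vp: "v ^ (q ^ m) = u ^ (q ^ m)" unfolding v_def using wX wY fr fY
      by (simp add: power_mult_distrib power_inverse)
    have "\<exists>!w. w \<noteq> 0 \<and> \<pi> w = 1 \<and> w ^ (q ^ m) = u ^ (q ^ m)"
      proof -
      have "u ^ (q ^ m) \<noteq> 0" using u by simp
      moreover have "\<pi> (u ^ (q ^ m)) = 1" using u P4[of u] by simp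
      ultimately show ?thesis using pi_hom pi_range pi_id q0 by (intro kernel_root)
    qed
    then have "u = v" using u v0 pv vp by (metis (no_types, lifting))
    then show ?thesis unfolding u_def v_def X_def Y_def .
  qed
  define \<omega> where "\<omega> X = \<omega>q X * inverse (\<omega>' X)" for X
  show ?thesis
  proof (intro exI[of _ \<omega>] conjI ballI)
    fix X assume X: "X \<in> quot G K N"
    show "\<omega> X \<noteq> 0" unfolding \<omega>_def using \<omega>'K[OF X] Wpart_nz[OF q0 omq_val[OF X]] by simp
  next
    fix g assume g: "g \<in> Lq"
    obtain \<nu> where \<nu>: "\<nu> \<in> \<Gamma>" and h\<nu>: "\<forall>x\<in>K. \<pi> (\<mu> (N #>\<^bsub>G\<^esub> g) (N #>\<^bsub>G\<^esub> x))
          = act G N g \<omega>q x * inverse (\<omega>q (N #>\<^bsub>G\<^esub> x)) * \<nu> (N #>\<^bsub>G\<^esub> x)" using omq[OF g] by blast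
    show "\<exists>\<gamma>\<in>\<Gamma>. \<forall>x\<in>K. \<mu> (N #>\<^bsub>G\<^esub> g) (N #>\<^bsub>G\<^esub> x) = act G N g \<omega> x * inverse (\<omega> (N #>\<^bsub>G\<^esub> x)) * \<gamma> (N #>\<^bsub>G\<^esub> x)"
    proof (intro bexI[OF _ \<nu>] ballI)
      fix x assume x: "x \<in> K"
      let ?X = "N #>\<^bsub>G\<^esub> x"
      let ?Y = "N #>\<^bsub>G\<^esub> (inv\<^bsub>G\<^esub> g \<otimes>\<^bsub>G\<^esub> x \<otimes>\<^bsub>G\<^esub> g)"
      let ?a = "\<mu> (N #>\<^bsub>G\<^esub> g) ?X"
      have X: "?X \<in> quot G K N" by (rule inQK[OF x])
      have gP: "N #>\<^bsub>G\<^esub> g \<in> quot G Lq N" using inP[OF g] unfolding P_def .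
      have a0: "?a \<noteq> 0" by (rule mu_val[OF gP X])
      have pa: "\<pi> ?a \<noteq> 0" by (rule P2[OF a0])
      have e1: "\<pi> ?a = \<omega>q ?Y * inverse (\<omega>q ?X) * \<nu> ?X"
        using bspec[OF h\<nu> x] by (simp only: act_def)
      have e2: "?a * inverse (\<pi> ?a) = \<omega>' ?X * inverse (\<omega>' ?Y)"
        using mu'_cob[OF g x] by (simp only: mu'_def)
      have "\<pi> ?a * (?a * inverse (\<pi> ?a)) = ?a * (\<pi> ?a * inverse (\<pi> ?a))" by (rule mult.left_commute)
      also have "\<dots> = ?a" by (simp only: right_inverse[OF pa] mult_1_right)
      finally have "?a = \<pi> ?a * (?a * inverse (\<pi> ?a))" by (rule sym)
      also have "\<dots> = \<pi> ?a * (\<omega>' ?X * inverse (\<omega>' ?Y))"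
        by (simp only: e2)
      also have "\<dots> = (\<omega>q ?Y * inverse (\<omega>q ?X) * \<nu> ?X) * (\<omega>' ?X * inverse (\<omega>' ?Y))"
        by (simp only: e1)
      also have "\<dots> = \<omega> ?Y * inverse (\<omega> ?X) * \<nu> ?X"
        unfolding \<omega>_def by (simp only: inverse_mult_distrib inverse_inverse_eq mult_ac)
      also have "\<dots> = act G N g \<omega> x * inverse (\<omega> (N #>\<^bsub>G\<^esub> x)) * \<nu> (N #>\<^bsub>G\<^esub> x)"
        by (simp only: act_def)
      finally show "\<mu> (N #>\<^bsub>G\<^esub> g) (N #>\<^bsub>G\<^esub> x) = act G N g \<omega> x * inverse (\<omega> (N #>\<^bsub>G\<^esub> x)) * \<nu> (N #>\<^bsub>G\<^esub> x)" .
    qed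
  qed
qed

end
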